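(* Let $q,M,j,y$ be positive integers with $M,j\in[1,q]$ and $y\in[j,q]$. Then $$|\{a\in[0,M-1]\cap\mathbb{Z}: y-j\le (aj)_q<y\}|=\lfloor Mj/q\rfloor+\chi\big(y\le (Mj)_q\big).$$
   Context: For an integer $\ell$, $(\ell)_q$ denotes the least nonnegative residue of $\ell$ modulo $q$. For an inequality $Q$, $\chi(Q)$ equals $1$ if $Q$ is true and $0$ if $Q$ is false. *)

theory Defs
  imports Main
begin

end

theory Submission
  imports Defs
begin

lemma step_arith:
  fixes q j y d r :: nat
  assumes "0 < q" "1 \<le> j" "j \<le> q" "j \<le> y" "y \<le> q" "r < q"
  shows "(q*d + r + j) div q + (if y \<le> (q*d + r + j) mod q then 1 else 0)
         = d + (if y \<le> r then 1 else 0) + (if y - j \<le> r \<and> r < y then 1 else 0)"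
proof (cases "r + j < q")
  case True
  have "(q*d + r + j) div q = d" using True assms
    by (metis add.assoc add.commute div_mult_self2 div_less less_nat_zero_code mult.commute add_0 nat_neq_iff)
  moreover have "(q*d + r + j) mod q = r + j" using True
    by (metis add.assoc mod_mult_self3 mod_less mult.commute)
  ultimately show ?thesis using assms True by auto
next
  case False
  have e: "q*d + r + j = q*(d+1) + (r + j - q)" using False by simp
  have l: "r + j - q < q" using assms False by linarith
  have "(q*d + r + j) div q = d + 1" unfolding e using l assms
    by (metis add.commute div_mult_self2 div_less add_0 mult.commute less_nat_zero_code nat_neq_iff)
  moreover have "(q*d + r + j) mod q = r + j - q" unfolding e using l
    by (metis mod_mult_self3 mod_less mult.commute add.commute)
  ultimately show ?thesis using assms False by auto
qed

lemma gen:
  fixes q M j y :: nat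
  assumes "0 < q" and "1 \<le> j" and "j \<le> q" and "j \<le> y" and "y \<le> q"
  shows "card {a. a < M \<and> y - j \<le> (a * j) mod q \<and> (a * j) mod q < y}
         = (M * j) div q + (if y \<le> (M * j) mod q then 1 else 0)"
proof (induction M)
  case 0
  then show ?case using assms by simp
next
  case (Suc M)
  let ?P = "\<lambda>a. y - j \<le> (a * j) mod q \<and> (a * j) mod q < y"
  have s: "{a. a < Suc M \<and> ?P a} = {a. a < M \<and> ?P a} \<union> (if ?P M then {M} else {})"
    by (auto simp: less_Suc_eq)
  have c: "card {a. a < Suc M \<and> ?P a} = card {a. a < M \<and> ?P a} + (if ?P M then 1 else 0)"
    unfolding s by (cases "?P M") auto
  define d where "d = (M*j) div q"
  define r where "r = (M*j) mod q"
  have mj: "M*j = q*d + r" unfolding d_def r_def by simp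
  have rq: "r < q" unfolding r_def using assms by simp
  have e: "Suc M * j = q*d + r + j" using mj by simp
  have "card {a. a < Suc M \<and> ?P a} = d + (if y \<le> r then 1 else 0) + (if ?P M then 1 else 0)"
    using c Suc.IH unfolding d_def r_def by simp
  also have "\<dots> = (q*d + r + j) div q + (if y \<le> (q*d + r + j) mod q then 1 else 0)"
    using step_arith[OF assms rq, of d] unfolding r_def by simp
  finally show ?case unfolding e .
qed

theorem lemma7p1:
  fixes q M j y :: nat
  assumes "0 < q" and "1 \<le> M" and "M \<le> q" and "1 \<le> j" and "j \<le> q"
    and "j \<le> y" and "y \<le> q"
  shows "card {a \<in> {0..M-1}. y - j \<le> (a * j) mod q \<and> (a * j) mod q < y}
         = (M * j) div q + (if y \<le> (M * j) mod q then 1 else 0)"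
proof -
  have "{a \<in> {0..M-1}. y - j \<le> (a * j) mod q \<and> (a * j) mod q < y}
      = {a. a < M \<and> y - j \<le> (a * j) mod q \<and> (a * j) mod q < y}" using assms(2) by auto
  then show ?thesis using gen[OF assms(1,4,5,6,7)] by simp
qed

end
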